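(* Let $F:\mathbb{R}^{n_e}\times\mathbb{R}^{n_x}\to\mathbb{R}^{n_e}$ and $G:\mathbb{R}^{n_e}\times\mathbb{R}^{n_x}\to\mathbb{R}^{n_x}$ be $C^2$, and consider the system $$\dot e = F(e,x),\qquad \dot x = G(e,x),$$ whose solution through $(e_0,x_0)$ at $t=0$ is denoted $(E(e_0,x_0,t),X(e_0,x_0,t))$. Assume property TULES-NL holds: the system is forward complete and there exist real numbers $r>0$, $k>0$, $\lambda>0$ such that $$|E(e_0,x_0,t)|\le k|e_0|\exp(-\lambda t)\quad\text{for all }(e_0,x_0,t)\in B_e(r)\times\mathbb{R}^{n_x}\times\mathbb{R}_{\ge 0}.$$ Assume moreover that there exist positive real numbers $\rho,\mu,c$ such that the following bounds hold. - For all $x\in\mathbb{R}^{n_x}$: $\left|\frac{\partial F}{\partial e}(0,x)\right|\le\mu$ and $\left|\frac{\partial G}{\partial x}(0,x)\right|\le\rho$. - For all $(e,x)\in B_e(kr)\times\mathbb{R}^{n_x}$: $\left|\frac{\partial^2 F}{\partial e\partial e}(e,x)\right|\le c$, $\left|\frac{\partial^2 F}{\partial x\partial e}(e,x)\right|\le c$ and $\left|\frac{\partial G}{\partial e}(e,x)\right|\le c$. Then property UES-TL holds. That is: - the system $\dot{\tilde x}=\tilde G(\tilde x):=G(0,\tilde x)$ is forward complete; - there exist real numbers $\tilde k>0$ and $\tilde\lambda>0$ such that every solution $(\tilde E(\tilde e_0,\tilde x_0,t),\tilde X(\tilde x_0,t))$ of the transversally linear system $$\dot{\tilde e}=\frac{\partial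 F}{\partial e}(0,\tilde x)\,\tilde e,\qquad \dot{\tilde x}=G(0,\tilde x)$$ satisfies $|\tilde E(\tilde e_0,\tilde x_0,t)|\le\tilde k\exp(-\tilde\lambda t)|\tilde e_0|$ for all $(\tilde e_0,\tilde x_0,t)\in\mathbb{R}^{n_e}\times\mathbb{R}^{n_x}\times\mathbb{R}_{\ge0}$.
   Context: $B_e(a)$ denotes the open ball of radius $a$ centered at the origin of $\mathbb{R}^{n_e}$. The notation $|\cdot|$ denotes the Euclidean norm for vectors and the corresponding operator norm for matrices and higher derivatives. *)

theory Defs
  imports "HOL-Analysis.Analysis"
begin

definition solves_fwd :: "(real \<Rightarrow> 'a::real_normed_vector) \<Rightarrow> ('a \<Rightarrow> 'a) \<Rightarrow> bool" where
  "solves_fwd \<phi> f \<longleftrightarrow> (\<forall>t\<ge>0. (\<phi> has_vector_derivative f (\<phi> t)) (at t within {0..}))"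

definition forward_complete :: "('a::real_normed_vector \<Rightarrow> 'a) \<Rightarrow> bool" where
  "forward_complete f \<longleftrightarrow> (\<forall>z0. \<exists>\<phi>. \<phi> 0 = z0 \<and> solves_fwd \<phi> f)"

end

theory Submission imports Defs begin
lemma gronwall_sq:
  fixes u :: "real \<Rightarrow> 'a::real_inner"
  assumes der: "\<And>s. 0 \<le> s \<Longrightarrow> s \<le> T \<Longrightarrow> (u has_vector_derivative u' s) (at s within {0..})"
    and bnd: "\<And>s. 0 \<le> s \<Longrightarrow> s \<le> T \<Longrightarrow> norm (u' s) \<le> L * norm (u s) + B"
    and L: "L \<ge> 0" and B: "B \<ge> 0" and t: "0 \<le> t" "t \<le> T"
  shows "(norm (u t))\<^sup>2 \<le> ((norm (u 0))\<^sup>2 + B\<^sup>2) * exp ((2*L+1)*t)"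
proof -
  define M where "M = 2*L+1"
  define g where "g s = exp (- (M * s)) * (inner (u s) (u s) + B\<^sup>2)" for s
  have cu: "continuous_on {0..t} u"
    unfolding continuous_on_eq_continuous_within
  proof
    fix s assume s: "s \<in> {0..t}"
    have "continuous (at s within {0..}) u"
      using der[of s] s t by (auto intro: has_vector_derivative_continuous)
    then show "continuous (at s within {0..t}) u"
      by (rule continuous_within_subset) auto
  qed
  have cont: "continuous_on {0..t} g"
    unfolding g_def by (intro continuous_intros cu)
  have dec: "g t \<le> g 0"
  proof (rule DERIV_nonpos_imp_decreasing_open[OF t(1) _ cont])
    fix s assume s: "0 < s" "s < t"
    have "(u has_vector_derivative u' s) (at s within {0<..})"
      using der[of s] s t by (auto intro: has_vector_derivative_within_subset)
    then have du: "(u has_vector_derivative u' s) (at s)"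
      using s at_within_open[of s "{0<..}"] by (metis greaterThan_iff open_greaterThan)
    then have du': "(u has_derivative (\<lambda>h. h *\<^sub>R u' s)) (at s)"
      by (simp add: has_vector_derivative_def)
    have dV: "((\<lambda>x. inner (u x) (u x)) has_derivative
        (\<lambda>h. inner (u s) (h *\<^sub>R u' s) + inner (h *\<^sub>R u' s) (u s))) (at s)"
      by (rule has_derivative_inner[OF du' du'])
    have dV2: "((\<lambda>x. inner (u x) (u x)) has_real_derivative (2 * inner (u s) (u' s))) (at s)"
    proof -
      have "(\<lambda>h. inner (u s) (h *\<^sub>R u' s) + inner (h *\<^sub>R u' s) (u s)) = (*) (2 * inner (u s) (u' s))"
        by (auto simp: inner_commute fun_eq_iff)
      then show ?thesis using dV unfolding has_field_derivative_def by simp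
    qed
    have dg: "(g has_real_derivative (exp (- (M * s)) * (-M) * (inner (u s) (u s) + B\<^sup>2)
          + exp (- (M * s)) * (2 * inner (u s) (u' s)))) (at s)"
      unfolding g_def
      by (auto intro!: derivative_eq_intros dV2 simp: algebra_simps)
    have "2 * inner (u s) (u' s) \<le> 2 * (norm (u s) * norm (u' s))"
      using norm_cauchy_schwarz[of "u s" "u' s"] by simp
    also have "\<dots> \<le> 2 * (norm (u s) * (L * norm (u s) + B))"
      using bnd[of s] s t by (intro mult_left_mono) auto
    also have "\<dots> \<le> M * (inner (u s) (u s)) + M * B\<^sup>2"
    proof -
      have "2 * norm (u s) * B \<le> (norm (u s))\<^sup>2 + B\<^sup>2"
        using sum_squares_bound[of "norm (u s)" B] by (simp add: power2_eq_square)
      moreover have "B\<^sup>2 \<le> M * B\<^sup>2" using L unfolding M_def by (simp add: mult_le_cancel_right1)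
      ultimately show ?thesis unfolding M_def
        by (simp add: power2_norm_eq_inner[symmetric] algebra_simps power2_eq_square)
    qed
    finally have "2 * inner (u s) (u' s) - M * (inner (u s) (u s) + B\<^sup>2) \<le> 0"
      by (simp add: algebra_simps)
    then have "exp (- (M * s)) * (-M) * (inner (u s) (u s) + B\<^sup>2)
          + exp (- (M * s)) * (2 * inner (u s) (u' s)) \<le> 0"
    proof -
      have "exp (- (M * s)) * (-M) * (inner (u s) (u s) + B\<^sup>2)
          + exp (- (M * s)) * (2 * inner (u s) (u' s)) = exp (- (M * s)) * (2 * inner (u s) (u' s) - M * (inner (u s) (u s) + B\<^sup>2))"
        by (simp add: algebra_simps)
      also have "\<dots> \<le> 0" using \<open>2 * inner (u s) (u' s) - M * (inner (u s) (u s) + B\<^sup>2) \<le> 0\<close>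
        by (intro mult_nonneg_nonpos) auto
      finally show ?thesis .
    qed
    then show "\<exists>y. (g has_real_derivative y) (at s) \<and> y \<le> 0" using dg by blast
  qed
  have "(norm (u t))\<^sup>2 \<le> inner (u t) (u t) + B\<^sup>2"
    by (simp add: power2_norm_eq_inner)
  also have "\<dots> = g t * exp (M * t)"
    unfolding g_def by (simp add: exp_minus field_simps)
  also have "\<dots> \<le> g 0 * exp (M * t)"
    using dec by simp
  also have "g 0 = (norm (u 0))\<^sup>2 + B\<^sup>2"
    unfolding g_def by (simp add: power2_norm_eq_inner)
  finally show ?thesis unfolding M_def .
qed
lemma mvt01:
  fixes f :: "real \<Rightarrow> 'a::real_normed_vector"
  assumes der: "\<And>s. (f has_vector_derivative f' s) (at s)"
    and bnd: "\<And>s. 0 \<le> s \<Longrightarrow> s \<le> 1 \<Longrightarrow> norm (f' s) \<le> B"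
  shows "norm (f 1 - f 0) \<le> B"
proof -
  have cf: "continuous_on {0..1} f"
    by (rule continuous_at_imp_continuous_on) (use der has_vector_derivative_continuous in blast)
  have dphi: "((\<lambda>x. B * x) has_vector_derivative B) (at x)" for x
    using has_real_derivative_iff_has_vector_derivative[THEN iffD1, OF DERIV_cmult_Id[of B x]] by simp
  have "norm (f 1 - f 0) \<le> B * 1 - B * 0"
    by (rule differentiable_bound_general[of 0 1 f "\<lambda>x. B * x" f' "\<lambda>_. B"])
       (use cf der dphi bnd in \<open>auto intro!: continuous_intros\<close>)
  then show ?thesis by simp
qed

lemma line_bound:
  fixes H :: "'a::real_normed_vector \<Rightarrow> 'b::real_normed_vector"
  assumes der: "\<And>p. (H has_derivative H' p) (at p)"
    and bnd: "\<And>s. 0 \<le> s \<Longrightarrow> s \<le> 1 \<Longrightarrow> norm (H' (p + s *\<^sub>R (q - p)) (q - p)) \<le> B"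
  shows "norm (H q - H p) \<le> B"
proof -
  have g: "((\<lambda>s. p + s *\<^sub>R (q - p)) has_vector_derivative (q - p)) (at s)" for s
    by (auto intro!: derivative_eq_intros)
  have "((H \<circ> (\<lambda>s. p + s *\<^sub>R (q - p))) has_vector_derivative H' (p + s *\<^sub>R (q - p)) (q - p)) (at s)" for s
    by (rule vector_derivative_diff_chain_within[OF g[of s]])
       (rule has_derivative_subset[OF der], simp)
  then have "norm ((H \<circ> (\<lambda>s. p + s *\<^sub>R (q - p))) 1 - (H \<circ> (\<lambda>s. p + s *\<^sub>R (q - p))) 0) \<le> B"
    by (intro mvt01[where f' = "\<lambda>s. H' (p + s *\<^sub>R (q - p)) (q - p)"] bnd) (auto simp: o_def)
  then show ?thesis by simp
qed

lemma blinfun_deriv_apply: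
  assumes "\<And>p. (DF has_derivative blinfun_apply (D2F p)) (at p)"
  shows "((\<lambda>p. blinfun_apply (DF p) w) has_derivative (\<lambda>h. blinfun_apply (blinfun_apply (D2F p) h) w)) (at p)"
  using bounded_linear.has_derivative[OF bounded_bilinear.bounded_linear_left[OF bounded_bilinear_blinfun_apply, of w] assms[of p]]
  by simp

lemma Gdiff_e:
  fixes G :: "'e::real_normed_vector \<times> 'x::real_normed_vector \<Rightarrow> 'x"
  assumes G_D1: "\<And>p. (G has_derivative blinfun_apply (DG p)) (at p)"
    and dGe: "\<And>e x v. norm e < R \<Longrightarrow> norm (DG (e, x) (v, 0)) \<le> c * norm v"
    and e: "norm e < R"
  shows "norm (G (e, x) - G (0, x)) \<le> c * norm e"
proof (rule line_bound[OF G_D1])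
  fix s :: real assume s: "0 \<le> s" "s \<le> 1"
  have "norm (s *\<^sub>R e) \<le> norm e" using s by (simp add: mult_left_le_one_le)
  then have "norm (s *\<^sub>R e) < R" using e by linarith
  then show "norm (DG ((0, x) + s *\<^sub>R ((e, x) - (0, x))) ((e, x) - (0, x))) \<le> c * norm e"
    using dGe[of "s *\<^sub>R e" x e] by simp
qed

lemma Gdiff_x:
  fixes G :: "'e::real_normed_vector \<times> 'x::real_normed_vector \<Rightarrow> 'x"
  assumes G_D1: "\<And>p. (G has_derivative blinfun_apply (DG p)) (at p)"
    and dGx0: "\<And>x w. norm (DG (0, x) (0, w)) \<le> \<rho> * norm w"
  shows "norm (G (0, x) - G (0, x')) \<le> \<rho> * norm (x - x')"
proof (rule line_bound[OF G_D1])
  fix s :: real assume s: "0 \<le> s" "s \<le> 1"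
  show "norm (DG ((0, x') + s *\<^sub>R ((0, x) - (0, x'))) ((0, x) - (0, x'))) \<le> \<rho> * norm (x - x')"
    using dGx0[of "x' + s *\<^sub>R (x - x')" "x - x'"] by simp
qed

lemma DFdiff_x:
  fixes DF :: "'e::real_normed_vector \<times> 'x::real_normed_vector \<Rightarrow> ('e \<times> 'x) \<Rightarrow>\<^sub>L 'e"
  assumes F_D2: "\<And>p. (DF has_derivative blinfun_apply (D2F p)) (at p)"
    and d2Fxe: "\<And>e x v w. norm e < R \<Longrightarrow>
                  norm (D2F (e, x) (0, w) (v, 0)) \<le> c * norm w * norm v"
    and R: "0 < R"
  shows "norm (DF (0, x) (v, 0) - DF (0, x') (v, 0)) \<le> c * norm (x - x') * norm v"
proof (rule line_bound[OF blinfun_deriv_apply[OF F_D2]])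
  fix s :: real assume s: "0 \<le> s" "s \<le> 1"
  show "norm (D2F ((0, x') + s *\<^sub>R ((0, x) - (0, x'))) ((0, x) - (0, x')) (v, 0)) \<le> c * norm (x - x') * norm v"
    using d2Fxe[where e=0 and x="x' + s *\<^sub>R (x - x')" and v=v and w="x - x'"] R by simp
qed

lemma DFdiff_e:
  fixes DF :: "'e::real_normed_vector \<times> 'x::real_normed_vector \<Rightarrow> ('e \<times> 'x) \<Rightarrow>\<^sub>L 'e"
  assumes F_D2: "\<And>p. (DF has_derivative blinfun_apply (D2F p)) (at p)"
    and d2Fee: "\<And>e x v w. norm e < R \<Longrightarrow>
                  norm (D2F (e, x) (v, 0) (w, 0)) \<le> c * norm v * norm w"
    and e: "norm e < R"
  shows "norm (DF (e, x) (w, 0) - DF (0, x) (w, 0)) \<le> c * norm e * norm w"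
proof (rule line_bound[OF blinfun_deriv_apply[OF F_D2]])
  fix s :: real assume s: "0 \<le> s" "s \<le> 1"
  have "norm (s *\<^sub>R e) \<le> norm e" using s by (simp add: mult_left_le_one_le)
  then have "norm (s *\<^sub>R e) < R" using e by linarith
  then show "norm (D2F ((0, x) + s *\<^sub>R ((e, x) - (0, x))) ((e, x) - (0, x)) (w, 0)) \<le> c * norm e * norm w"
    using d2Fee[of "s *\<^sub>R e" x e w] by simp
qed

lemma F_taylor:
  fixes F :: "'e::real_normed_vector \<times> 'x::real_normed_vector \<Rightarrow> 'e"
  assumes F_D1: "\<And>p. (F has_derivative blinfun_apply (DF p)) (at p)"
    and F_D2: "\<And>p. (DF has_derivative blinfun_apply (D2F p)) (at p)"
    and d2Fee: "\<And>e x v w. norm e < R \<Longrightarrow>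
                  norm (D2F (e, x) (v, 0) (w, 0)) \<le> c * norm v * norm w"
    and e: "norm e < R" and c: "c \<ge> 0"
  shows "norm (F (e, x) - F (0, x) - DF (0, x) (e, 0)) \<le> c * norm e * norm e"
proof -
  let ?H = "\<lambda>p. F p - DF (0, x) p"
  have dH: "(?H has_derivative (\<lambda>h. DF p h - DF (0, x) h)) (at p)" for p
    by (intro has_derivative_diff F_D1 bounded_linear_imp_has_derivative blinfun.bounded_linear_right)
  have "norm (?H (e, x) - ?H (0, x)) \<le> c * norm e * norm e"
  proof (rule line_bound[OF dH])
    fix s :: real assume s: "0 \<le> s" "s \<le> 1"
    have n: "norm (s *\<^sub>R e) \<le> norm e" using s by (simp add: mult_left_le_one_le)
    then have "norm (s *\<^sub>R e) < R" using e by linarith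
    from DFdiff_e[OF F_D2 d2Fee this, of x e]
    have "norm (DF (s *\<^sub>R e, x) (e, 0) - DF (0, x) (e, 0)) \<le> c * norm (s *\<^sub>R e) * norm e" .
    also have "\<dots> \<le> c * norm e * norm e"
      using n c by (intro mult_right_mono mult_left_mono) auto
    finally show "norm (DF ((0, x) + s *\<^sub>R ((e, x) - (0, x))) ((e, x) - (0, x)) - DF (0, x) ((e, x) - (0, x))) \<le> c * norm e * norm e"
      by simp
  qed
  moreover have "?H (e, x) - ?H (0, x) = F (e, x) - F (0, x) - DF (0, x) (e, 0)"
  proof -
    have "DF (0, x) (e, x) - DF (0, x) (0, x) = DF (0, x) ((e, x) - (0, x))"
      by (simp only: blinfun.diff_right)
    then show ?thesis by (simp add: algebra_simps)
  qed
  ultimately show ?thesis by simp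
qed


lemma solves_fst:
  assumes "solves_fwd \<phi> f" "0 \<le> s"
  shows "((\<lambda>t. fst (\<phi> t)) has_vector_derivative fst (f (\<phi> s))) (at s within {0..})"
proof -
  from assms have "(\<phi> has_vector_derivative f (\<phi> s)) (at s within {0..})"
    by (simp add: solves_fwd_def)
  then show ?thesis unfolding has_vector_derivative_def
    by (drule_tac has_derivative_fst) simp
qed

lemma solves_snd:
  assumes "solves_fwd \<phi> f" "0 \<le> s"
  shows "((\<lambda>t. snd (\<phi> t)) has_vector_derivative snd (f (\<phi> s))) (at s within {0..})"
proof -
  from assms have "(\<phi> has_vector_derivative f (\<phi> s)) (at s within {0..})"
    by (simp add: solves_fwd_def)
  then show ?thesis unfolding has_vector_derivative_def
    by (drule_tac has_derivative_snd) simp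
qed

lemma deriv_unique0:
  fixes f :: "real \<Rightarrow> 'a::real_normed_vector"
  assumes "(f has_vector_derivative a) (at 0 within {0..})"
    and "(f has_vector_derivative b) (at 0 within {0..})"
  shows "a = b"
proof -
  have "(f has_vector_derivative a) (at 0 within cbox 0 1)"
    using assms(1) by (rule has_vector_derivative_within_subset) auto
  moreover have "(f has_vector_derivative b) (at 0 within cbox 0 1)"
    using assms(2) by (rule has_vector_derivative_within_subset) auto
  ultimately show ?thesis
    by (rule vector_derivative_unique_within_closed_interval[rotated 2]) auto
qed

lemma mult3_mono:
  fixes c x y X Y :: real
  assumes "0 \<le> c" "0 \<le> x" "x \<le> X" "0 \<le> y" "y \<le> Y"
  shows "c * x * y \<le> c * X * Y"
  using assms by (metis mult_left_mono mult_mono order_trans mult_nonneg_nonneg)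


lemma ex2: "(exp (x / 2))\<^sup>2 = exp (x::real)"
  by (simp add: power2_eq_square exp_add[symmetric])

theorem proposition1:
  fixes F :: "'e::euclidean_space \<times> 'x::euclidean_space \<Rightarrow> 'e"
    and G :: "'e \<times> 'x \<Rightarrow> 'x"
    and DF :: "'e \<times> 'x \<Rightarrow> ('e \<times> 'x) \<Rightarrow>\<^sub>L 'e"
    and D2F :: "'e \<times> 'x \<Rightarrow> ('e \<times> 'x) \<Rightarrow>\<^sub>L (('e \<times> 'x) \<Rightarrow>\<^sub>L 'e)"
    and DG :: "'e \<times> 'x \<Rightarrow> ('e \<times> 'x) \<Rightarrow>\<^sub>L 'x"
    and D2G :: "'e \<times> 'x \<Rightarrow> ('e \<times> 'x) \<Rightarrow>\<^sub>L (('e \<times> 'x) \<Rightarrow>\<^sub>L 'x)"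
    and r k lam \<rho> \<mu> c :: real
  assumes F_D1: "\<And>p. (F has_derivative blinfun_apply (DF p)) (at p)"
    and F_D2: "\<And>p. (DF has_derivative blinfun_apply (D2F p)) (at p)"
    and F_C2: "continuous_on UNIV D2F"
    and G_D1: "\<And>p. (G has_derivative blinfun_apply (DG p)) (at p)"
    and G_D2: "\<And>p. (DG has_derivative blinfun_apply (D2G p)) (at p)"
    and G_C2: "continuous_on UNIV D2G"
    and fwd: "forward_complete (\<lambda>p. (F p, G p))"
    and r_pos: "r > 0" and k_pos: "k > 0" and lam_pos: "lam > 0"
    and TULES: "\<And>\<phi> t. solves_fwd \<phi> (\<lambda>p. (F p, G p)) \<Longrightarrow> norm (fst (\<phi> 0)) < r \<Longrightarrow> t \<ge> 0 \<Longrightarrow>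
                  norm (fst (\<phi> t)) \<le> k * norm (fst (\<phi> 0)) * exp (- lam * t)"
    and rho_pos: "\<rho> > 0" and mu_pos: "\<mu> > 0" and c_pos: "c > 0"
    and dFe0: "\<And>x v. norm (DF (0, x) (v, 0)) \<le> \<mu> * norm v"
    and dGx0: "\<And>x w. norm (DG (0, x) (0, w)) \<le> \<rho> * norm w"
    and d2Fee: "\<And>e x v w. norm e < k * r \<Longrightarrow>
                  norm (D2F (e, x) (v, 0) (w, 0)) \<le> c * norm v * norm w"
    and d2Fxe: "\<And>e x v w. norm e < k * r \<Longrightarrow>
                  norm (D2F (e, x) (0, w) (v, 0)) \<le> c * norm w * norm v"
    and dGe: "\<And>e x v. norm e < k * r \<Longrightarrow> norm (DG (e, x) (v, 0)) \<le> c * norm v"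
  shows "forward_complete (\<lambda>x. G (0, x)) \<and>
         (\<exists>k' lam'. k' > 0 \<and> lam' > 0 \<and>
            (\<forall>\<psi> t. solves_fwd \<psi> (\<lambda>(e, x). (DF (0, x) (e, 0), G (0, x))) \<and> t \<ge> 0 \<longrightarrow>
                norm (fst (\<psi> t)) \<le> k' * exp (- lam' * t) * norm (fst (\<psi> 0))))"
proof -
  let ?f = "\<lambda>p. (F p, G p)"
  have zero_sol: "\<exists>\<phi>. \<phi> 0 = (0, x0) \<and> solves_fwd \<phi> ?f \<and> (\<forall>t\<ge>0. fst (\<phi> t) = 0)" for x0
  proof -
    obtain \<phi> where \<phi>0: "\<phi> 0 = (0, x0)" and sol: "solves_fwd \<phi> ?f"
      using fwd unfolding forward_complete_def by blast
    have "fst (\<phi> t) = 0" if "t \<ge> 0" for t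
      using TULES[OF sol _ that] \<phi>0 r_pos by simp
    then show ?thesis using \<phi>0 sol by blast
  qed
  have Fz: "F (0, x) = 0" for x
  proof -
    obtain \<phi> where \<phi>0: "\<phi> 0 = (0, x)" and sol: "solves_fwd \<phi> ?f" and z: "\<forall>t\<ge>0. fst (\<phi> t) = 0"
      using zero_sol by blast
    have d1: "((\<lambda>t. fst (\<phi> t)) has_vector_derivative F (0, x)) (at 0 within {0..})"
      using solves_fst[OF sol, of 0] \<phi>0 by simp
    have d2: "((\<lambda>t. fst (\<phi> t)) has_vector_derivative 0) (at 0 within {0..})"
      by (rule has_vector_derivative_transform[of 0 "{0..}" _ "\<lambda>_. 0"]) (use z in auto)
    show ?thesis using deriv_unique0[OF d1 d2] .
  qed
  have fc: "forward_complete (\<lambda>x. G (0, x))"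
    unfolding forward_complete_def
  proof
    fix x0
    obtain \<phi> where \<phi>0: "\<phi> 0 = (0, x0)" and sol: "solves_fwd \<phi> ?f" and z: "\<forall>t\<ge>0. fst (\<phi> t) = 0"
      using zero_sol by blast
    have "solves_fwd (\<lambda>t. snd (\<phi> t)) (\<lambda>x. G (0, x))"
      unfolding solves_fwd_def
    proof (intro allI impI)
      fix t :: real assume t: "t \<ge> 0"
      have "\<phi> t = (0, snd (\<phi> t))" using z t by (simp add: prod_eq_iff)
      then have "G (\<phi> t) = G (0, snd (\<phi> t))" by metis
      then show "((\<lambda>t. snd (\<phi> t)) has_vector_derivative G (0, snd (\<phi> t))) (at t within {0..})"
        using solves_snd[OF sol t] by simp
    qed
    then show "\<exists>\<phi>. \<phi> 0 = x0 \<and> solves_fwd \<phi> (\<lambda>x. G (0, x))" using \<phi>0 by (intro exI[of _ "\<lambda>t. snd (\<phi> t)"]) simp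
  qed
  have main: "norm (fst (\<psi> t)) \<le> k * exp (- lam * t) * norm (fst (\<psi> 0))"
    if sol: "solves_fwd \<psi> (\<lambda>(e, x). (DF (0, x) (e, 0), G (0, x)))" and t: "t \<ge> 0" for \<psi> t
  proof -
    define et where "et s = fst (\<psi> s)" for s
    define xt where "xt s = snd (\<psi> s)" for s
    define a where "a = norm (et 0)"
    have a0: "a \<ge> 0" unfolding a_def by simp
    have det: "(et has_vector_derivative DF (0, xt s) (et s, 0)) (at s within {0..})" if "s \<ge> 0" for s
      using solves_fst[OF sol that] unfolding et_def xt_def by (simp add: case_prod_beta)
    have dxt: "(xt has_vector_derivative G (0, xt s)) (at s within {0..})" if "s \<ge> 0" for s
      using solves_snd[OF sol that] unfolding et_def xt_def by (simp add: case_prod_beta)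
    define R where "R = k * a * exp (- lam * t)"
    define K0 where "K0 = k * a"
    define M1 where "M1 = 2 * \<rho> + 1"
    define C1 where "C1 = c * K0 * exp (M1 * t / 2)"
    define C2 where "C2 = c * K0 * K0 + c * C1 * K0"
    define M2 where "M2 = 2 * \<mu> + 1"
    define C3 where "C3 = C2 * exp (M2 * t / 2)"
    have K0: "K0 \<ge> 0" unfolding K0_def using k_pos a0 by simp
    have C1: "C1 \<ge> 0" unfolding C1_def using c_pos K0 by simp
    have C2: "C2 \<ge> 0" unfolding C2_def using c_pos K0 C1 by simp
    have C3: "C3 \<ge> 0" unfolding C3_def using C2 by simp
    have key: "norm (et t) \<le> R + \<epsilon> * C3" if eps: "0 < \<epsilon>" "\<epsilon> * a < r" for \<epsilon>
    proof -
      obtain \<phi> where \<phi>0: "\<phi> 0 = (\<epsilon> *\<^sub>R et 0, xt 0)" and sol\<phi>: "solves_fwd \<phi> ?f"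
        using fwd unfolding forward_complete_def by blast
      define E where "E s = fst (\<phi> s)" for s
      define X where "X s = snd (\<phi> s)" for s
      have dE: "(E has_vector_derivative F (E s, X s)) (at s within {0..})" if "s \<ge> 0" for s
        using solves_fst[OF sol\<phi> that] unfolding E_def X_def by simp
      have dX: "(X has_vector_derivative G (E s, X s)) (at s within {0..})" if "s \<ge> 0" for s
        using solves_snd[OF sol\<phi> that] unfolding E_def X_def by simp
      have E0: "norm (E 0) = \<epsilon> * a" using \<phi>0 eps unfolding E_def a_def by simp
      have X0: "X 0 = xt 0" using \<phi>0 unfolding X_def by simp
      have Ebd0: "norm (E s) \<le> k * (\<epsilon> * a) * exp (- lam * s)" if "s \<ge> 0" for s
        using TULES[OF sol\<phi> _ that] E0 eps unfolding E_def by simp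
      have Ebd: "norm (E s) \<le> \<epsilon> * K0" if "s \<ge> 0" for s
      proof -
        have "exp (- lam * s) \<le> 1" using lam_pos that by simp
        then have "k * (\<epsilon> * a) * exp (- lam * s) \<le> k * (\<epsilon> * a) * 1"
          using k_pos eps a0 by (intro mult_left_mono) auto
        moreover have "k * (\<epsilon> * a) = \<epsilon> * K0" unfolding K0_def by (simp add: mult_ac)
        ultimately show ?thesis using Ebd0[OF that] by linarith
      qed
      have EkR: "norm (E s) < k * r" if "s \<ge> 0" for s
      proof -
        have "\<epsilon> * K0 < k * r" unfolding K0_def using eps k_pos by simp
        then show ?thesis using Ebd[OF that] by linarith
      qed
      define y where "y s = X s - xt s" for s
      have dy: "(y has_vector_derivative (G (E s, X s) - G (0, xt s))) (at s within {0..})" if "s \<ge> 0" for s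
        unfolding y_def by (intro has_vector_derivative_diff dX dxt that)
      have ybd': "norm (G (E s, X s) - G (0, xt s)) \<le> \<rho> * norm (y s) + c * \<epsilon> * K0" if "s \<ge> 0" for s
      proof -
        have "norm (G (E s, X s) - G (0, xt s)) \<le> norm (G (E s, X s) - G (0, X s)) + norm (G (0, X s) - G (0, xt s))"
          using norm_triangle_ineq[of "G (E s, X s) - G (0, X s)" "G (0, X s) - G (0, xt s)"] by simp
        also have "\<dots> \<le> c * norm (E s) + \<rho> * norm (y s)"
          using Gdiff_e[OF G_D1 dGe EkR[OF that]] Gdiff_x[OF G_D1 dGx0] unfolding y_def
          by (intro add_mono) auto
        also have "c * norm (E s) \<le> c * (\<epsilon> * K0)"
          using Ebd[OF that] c_pos by (intro mult_left_mono) auto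
        finally show ?thesis by (simp add: algebra_simps)
      qed
      have ybd: "norm (y s) \<le> \<epsilon> * C1" if "0 \<le> s" "s \<le> t" for s
      proof -
        have "(norm (y s))\<^sup>2 \<le> ((norm (y 0))\<^sup>2 + (c * \<epsilon> * K0)\<^sup>2) * exp ((2 * \<rho> + 1) * s)"
          by (rule gronwall_sq[where T = t, OF dy ybd']) (use rho_pos c_pos eps K0 that in auto)
        also have "\<dots> = (c * \<epsilon> * K0)\<^sup>2 * exp (M1 * s)"
          using X0 unfolding y_def M1_def by simp
        also have "\<dots> \<le> (c * \<epsilon> * K0)\<^sup>2 * exp (M1 * t)"
        proof -
          have "M1 * s \<le> M1 * t" using that rho_pos unfolding M1_def by (intro mult_left_mono) auto
          then show ?thesis by (intro mult_left_mono) auto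
        qed
        also have "\<dots> = (\<epsilon> * C1)\<^sup>2"
          unfolding C1_def by (simp add: power_mult_distrib mult_ac ex2)
        finally show ?thesis
          by (rule power2_le_imp_le) (use eps C1 in simp)
      qed
      \<comment> \<open>the error of the linear approximation\<close>
      define \<delta> where "\<delta> s = E s - \<epsilon> *\<^sub>R et s" for s
      have d\<delta>: "(\<delta> has_vector_derivative (F (E s, X s) - \<epsilon> *\<^sub>R DF (0, xt s) (et s, 0))) (at s within {0..})"
        if "s \<ge> 0" for s
        unfolding \<delta>_def by (intro has_vector_derivative_diff dE that bounded_linear.has_vector_derivative[OF bounded_linear_scaleR_right] det)
      have \<delta>bd': "norm (F (E s, X s) - \<epsilon> *\<^sub>R DF (0, xt s) (et s, 0)) \<le> \<mu> * norm (\<delta> s) + \<epsilon> * \<epsilon> * C2"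
        if "0 \<le> s" "s \<le> t" for s
      proof -
        have lin: "DF (0, xt s) (E s, 0) - \<epsilon> *\<^sub>R DF (0, xt s) (et s, 0) = DF (0, xt s) (\<delta> s, 0)"
        proof -
          have "(\<delta> s, 0::'x) = (E s, 0) - \<epsilon> *\<^sub>R (et s, 0)" unfolding \<delta>_def by simp
          then show ?thesis by (simp only: blinfun.diff_right blinfun.scaleR_right)
        qed
        have eq: "F (E s, X s) - \<epsilon> *\<^sub>R DF (0, xt s) (et s, 0) =
            (F (E s, X s) - F (0, X s) - DF (0, X s) (E s, 0))
          + (DF (0, X s) (E s, 0) - DF (0, xt s) (E s, 0)) + DF (0, xt s) (\<delta> s, 0)"
          using lin Fz[of "X s"] by (simp add: algebra_simps)
        have n1: "norm (F (E s, X s) - F (0, X s) - DF (0, X s) (E s, 0)) \<le> c * (\<epsilon> * K0) * (\<epsilon> * K0)"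
          using F_taylor[OF F_D1 F_D2 d2Fee EkR[OF that(1)] less_imp_le[OF c_pos], where x="X s"]
            mult3_mono[OF less_imp_le[OF c_pos] norm_ge_zero Ebd[OF that(1)] norm_ge_zero Ebd[OF that(1)]] by simp
        have n2: "norm (DF (0, X s) (E s, 0) - DF (0, xt s) (E s, 0)) \<le> c * (\<epsilon> * C1) * (\<epsilon> * K0)"
          using DFdiff_x[OF F_D2 d2Fxe mult_pos_pos[OF k_pos r_pos], where v="E s" and x="X s" and x'="xt s"]
            mult3_mono[OF less_imp_le[OF c_pos] norm_ge_zero ybd[OF that] norm_ge_zero Ebd[OF that(1)]] unfolding y_def by simp
        have n3: "norm (DF (0, xt s) (\<delta> s, 0)) \<le> \<mu> * norm (\<delta> s)" by (rule dFe0)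
        have "norm (F (E s, X s) - \<epsilon> *\<^sub>R DF (0, xt s) (et s, 0)) \<le>
            c * (\<epsilon> * K0) * (\<epsilon> * K0) + c * (\<epsilon> * C1) * (\<epsilon> * K0) + \<mu> * norm (\<delta> s)"
          unfolding eq using n1 n2 n3 by (intro norm_triangle_le add_mono) auto
        also have "\<dots> = \<mu> * norm (\<delta> s) + \<epsilon> * \<epsilon> * C2"
          unfolding C2_def by (simp add: algebra_simps)
        finally show ?thesis .
      qed
      have \<delta>bd: "norm (\<delta> t) \<le> \<epsilon> * \<epsilon> * C3"
      proof -
        have "(norm (\<delta> t))\<^sup>2 \<le> ((norm (\<delta> 0))\<^sup>2 + (\<epsilon> * \<epsilon> * C2)\<^sup>2) * exp ((2 * \<mu> + 1) * t)"
          by (rule gronwall_sq[where T = t, OF d\<delta> \<delta>bd']) (use mu_pos C2 eps t in auto)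
        also have "\<dots> = (\<epsilon> * \<epsilon> * C2)\<^sup>2 * exp (M2 * t)"
          using \<phi>0 unfolding \<delta>_def E_def M2_def by simp
        also have "\<dots> = (\<epsilon> * \<epsilon> * C3)\<^sup>2"
          unfolding C3_def by (simp add: power_mult_distrib mult_ac ex2)
        finally show ?thesis
          by (rule power2_le_imp_le) (use eps C3 in simp)
      qed
      have "\<epsilon> * norm (et t) = norm (E t - \<delta> t)"
        unfolding \<delta>_def using eps by simp
      also have "\<dots> \<le> norm (E t) + norm (\<delta> t)" by (rule norm_triangle_ineq4)
      also have "\<dots> \<le> k * (\<epsilon> * a) * exp (- lam * t) + \<epsilon> * \<epsilon> * C3"
        using Ebd0[OF t] \<delta>bd by (rule add_mono)
      also have "\<dots> = \<epsilon> * (R + \<epsilon> * C3)"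
        unfolding R_def by (simp add: algebra_simps)
      finally show ?thesis using eps by simp
    qed
    have "norm (et t) \<le> R"
    proof (rule ccontr)
      assume "\<not> norm (et t) \<le> R"
      then have d: "norm (et t) - R > 0" by simp
      define \<epsilon> where "\<epsilon> = min (r / (a + 1)) ((norm (et t) - R) / (C3 + 1)) / 2"
      have e0: "\<epsilon> > 0" unfolding \<epsilon>_def using r_pos a0 d C3 by simp
      have "\<epsilon> \<le> r / (a + 1) / 2" unfolding \<epsilon>_def by (rule divide_right_mono) auto
      then have "\<epsilon> * a \<le> r / (a + 1) / 2 * a" using a0 by (rule mult_right_mono)
      also have "\<dots> < r" using a0 r_pos by (simp add: field_simps add_nonneg_pos mult_nonneg_nonneg)
      finally have e1: "\<epsilon> * a < r" .
      have "\<epsilon> \<le> (norm (et t) - R) / (C3 + 1) / 2" unfolding \<epsilon>_def by (rule divide_right_mono) auto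
      then have "\<epsilon> * C3 \<le> (norm (et t) - R) / (C3 + 1) / 2 * C3" using C3 by (rule mult_right_mono)
      also have "\<dots> < norm (et t) - R" using C3 d mult_left_mono[of R "norm (et t)" C3] by (simp add: field_simps)
      finally have "\<epsilon> * C3 < norm (et t) - R" .
      with key[OF e0 e1] show False by simp
    qed
    then show ?thesis unfolding R_def et_def a_def by (simp add: algebra_simps)
  qed
  show ?thesis using fc main k_pos lam_pos by blast
qed

end
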